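(* Let $\varepsilon>0$ and let $f,g:(0,\infty)\to\mathbb R$ be positive functions such that $g$ is non-decreasing and $\lim_{t\to0^+}f(t)=0$. Then there exists a family of sets $S(\rho)\subset\mathbb R$, $\rho\in(0,\infty)$, such that (1) $S(\tau)\subset S(\rho)$ for all $0<\tau\le\rho$; (2) for every $\rho\in(0,\infty)$ there exist $P,Q\in\mathbb R$ with $S(\rho)\subset B(P,g(\rho))\cup B(Q,g(\rho))$; (3) if $A\subset\mathbb R$ is such that for all $0<\rho\le\varepsilon$ and all $P\in S(\rho)$ there exists $Q\in A$ with $|Q-P|\le f(\rho)$, then $A$ is infinite.
   Context: $B(P,t)=\{x\in\mathbb R:|x-P|<t\}$ denotes the open interval of radius $t$ about $P$. *)

theory Defs
  imports "HOL-Analysis.Analysis"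
begin

end

theory Submission
  imports Defs
begin

theorem mainTheorem13:
  fixes \<epsilon> :: real and f g :: "real \<Rightarrow> real"
  assumes "\<epsilon> > 0"
    and "\<And>t. t > 0 \<Longrightarrow> f t > 0"
    and "\<And>t. t > 0 \<Longrightarrow> g t > 0"
    and "mono_on {0<..} g"
    and "(f \<longlongrightarrow> 0) (at_right 0)"
  shows "\<exists>S :: real \<Rightarrow> real set.
     (\<forall>\<tau> \<rho>. 0 < \<tau> \<and> \<tau> \<le> \<rho> \<longrightarrow> S \<tau> \<subseteq> S \<rho>) \<and>
     (\<forall>\<rho>>0. \<exists>P Q. S \<rho> \<subseteq> ball P (g \<rho>) \<union> ball Q (g \<rho>)) \<and>
     (\<forall>A :: real set. (\<forall>\<rho>. 0 < \<rho> \<and> \<rho> \<le> \<epsilon> \<longrightarrow> (\<forall>P\<in>S \<rho>. \<exists>Q\<in>A. \<bar>Q - P\<bar> \<le> f \<rho>))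
        \<longrightarrow> infinite A)"
proof -
  have exT: "\<exists>t. 0 < t \<and> t \<le> \<epsilon> \<and> f t < x/4" if "x > 0" for x
  proof -
    have "\<forall>\<^sub>F t in at_right 0. f t < x/4"
      using order_tendstoD(2)[OF assms(5), of "x/4"] that by simp
    then obtain b where b: "b > 0" "\<And>y. 0 < y \<Longrightarrow> y < b \<Longrightarrow> f y < x/4"
      unfolding eventually_at_right_field by auto
    show ?thesis
      by (rule exI[of _ "min (b/2) \<epsilon>"]) (use b assms(1) in auto)
  qed
  define T where "T = (\<lambda>x. SOME t. 0 < t \<and> t \<le> \<epsilon> \<and> f t < x/4)"
  have T: "0 < T x \<and> T x \<le> \<epsilon> \<and> f (T x) < x/4" if "x > 0" for x
    unfolding T_def using someI_ex[OF exT[OF that]] .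
  define x where "x = rec_nat (1::real) (\<lambda>_ y. min (g (T y) / 2) (y / 8))"
  have x0: "x 0 = 1" and xS: "\<And>n. x (Suc n) = min (g (T (x n)) / 2) (x n / 8)"
    by (simp_all add: x_def)
  have xpos: "x n > 0" for n
  proof (induction n)
    case 0 then show ?case by (simp add: x0)
  next
    case (Suc n)
    have "g (T (x n)) > 0" using assms(3) T[OF Suc] by blast
    then show ?case using Suc by (simp add: xS)
  qed
  have xdec: "decseq x"
  proof (rule decseq_SucI)
    fix n
    have "x (Suc n) \<le> x n / 8" by (simp add: xS)
    then show "x (Suc n) \<le> x n" using xpos[of n] by linarith
  qed
  define \<tau> where "\<tau> n = T (x n)" for n
  have tau: "0 < \<tau> n" "\<tau> n \<le> \<epsilon>" "f (\<tau> n) < x n / 4" for n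
    using T[OF xpos[of n]] by (auto simp: \<tau>_def)
  have xS1: "x (Suc n) < g (\<tau> n)" "x (Suc n) \<le> x n / 8" for n
  proof -
    have "g (\<tau> n) > 0" using assms(3) tau(1) by blast
    then show "x (Suc n) < g (\<tau> n)" "x (Suc n) \<le> x n / 8"
      by (auto simp: xS \<tau>_def min_def)
  qed
  define S where "S \<rho> = insert 0 {x j | j. \<tau> j \<le> \<rho>}" for \<rho>
  have P1: "\<forall>t r. 0 < t \<and> t \<le> r \<longrightarrow> S t \<subseteq> S r"
    unfolding S_def by auto
  have P2: "\<forall>\<rho>>0. \<exists>P Q. S \<rho> \<subseteq> ball P (g \<rho>) \<union> ball Q (g \<rho>)"
  proof (intro allI impI)
    fix \<rho> :: real assume rp: "\<rho> > 0"
    have grp: "g \<rho> > 0" using assms(3) rp by blast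
    show "\<exists>P Q. S \<rho> \<subseteq> ball P (g \<rho>) \<union> ball Q (g \<rho>)"
    proof (cases "\<exists>j. \<tau> j \<le> \<rho>")
      case False
      then have "S \<rho> = {0}" by (auto simp: S_def)
      then have "S \<rho> \<subseteq> ball 0 (g \<rho>) \<union> ball 0 (g \<rho>)" using grp by auto
      then show ?thesis by blast
    next
      case True
      define J where "J = (LEAST j. \<tau> j \<le> \<rho>)"
      have J: "\<tau> J \<le> \<rho>" using True unfolding J_def by (metis LeastI)
      have gJ: "g (\<tau> J) \<le> g \<rho>"
        using assms(4) tau(1)[of J] J rp by (auto intro: mono_onD)
      have "S \<rho> \<subseteq> ball 0 (g \<rho>) \<union> ball (x J) (g \<rho>)"
      proof
        fix p assume "p \<in> S \<rho>"
        then consider "p = 0" | j where "p = x j" "\<tau> j \<le> \<rho>" by (auto simp: S_def)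
        then show "p \<in> ball 0 (g \<rho>) \<union> ball (x J) (g \<rho>)"
        proof cases
          case 1 then show ?thesis using grp by auto
        next
          case (2 j)
          have "J \<le> j" unfolding J_def using 2 by (simp add: Least_le)
          show ?thesis
          proof (cases "j = J")
            case True then show ?thesis using 2 grp by auto
          next
            case False
            then have "Suc J \<le> j" using \<open>J \<le> j\<close> by simp
            then have "x j \<le> x (Suc J)" using xdec by (simp add: decseq_def)
            then have "x j < g \<rho>" using xS1(1)[of J] gJ by linarith
            then show ?thesis using 2 xpos[of j] by (auto simp: dist_real_def)
          qed
        qed
      qed
      then show ?thesis by blast
    qed
  qed
  have P3: "\<forall>A :: real set. (\<forall>\<rho>. 0 < \<rho> \<and> \<rho> \<le> \<epsilon> \<longrightarrow> (\<forall>P\<in>S \<rho>. \<exists>Q\<in>A. \<bar>Q - P\<bar> \<le> f \<rho>))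
        \<longrightarrow> infinite A"
  proof (intro allI impI)
    fix A :: "real set"
    assume H: "\<forall>\<rho>. 0 < \<rho> \<and> \<rho> \<le> \<epsilon> \<longrightarrow> (\<forall>P\<in>S \<rho>. \<exists>Q\<in>A. \<bar>Q - P\<bar> \<le> f \<rho>)"
    have "\<exists>Q\<in>A. \<bar>Q - x j\<bar> \<le> f (\<tau> j)" for j
      using H tau(1,2)[of j] by (auto simp: S_def)
    then obtain h where h: "\<And>j. h j \<in> A" "\<And>j. \<bar>h j - x j\<bar> \<le> f (\<tau> j)"
      by metis
    have hx: "\<bar>h j - x j\<bar> < x j / 4" for j using h(2)[of j] tau(3)[of j] by linarith
    have "inj h"
    proof (rule injI)
      fix i j assume eq: "h i = h j"
      show "i = j"
      proof (rule ccontr)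
        assume "i \<noteq> j"
        then have "i < j \<or> j < i" by arith
        moreover have False if "a < b" "h a = h b" for a b
        proof -
          have "x b \<le> x (Suc a)" using that xdec by (simp add: decseq_def Suc_le_eq)
          then have "x b \<le> x a / 8" using xS1(2)[of a] by linarith
          then show False using hx[of a] hx[of b] that(2) xpos[of a] xpos[of b] by linarith
        qed
        ultimately show False using eq by metis
      qed
    qed
    then have "infinite (range h)" by (simp add: range_inj_infinite)
    moreover have "range h \<subseteq> A" using h(1) by auto
    ultimately show "infinite A" using finite_subset by blast
  qed
  show ?thesis using P1 P2 P3 by blast
qed

end
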